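(* Consider a charging station with a finite set $\mathcal{V}$ of electric vehicles (EVs) over discrete time slots $t\in\{1,\dots,T\}$, with the per-EV data and the set $\mathcal{F}_c$ described in the context. Let $(\{\hat p_{d,t}\}_t,\{\check p_{d,t}\}_t)$ be the upper and lower aggregate power trajectories obtained from problem P1 (in particular they belong to $\mathcal{F}_c$, together with some individual trajectories $\hat p^c_{v,t},\hat e_{v,t},\check p^c_{v,t},\check e_{v,t}$ witnessing membership). Then for every aggregate EV charging power trajectory $\{p_{d,t}\}_{t}$ satisfying $\check p_{d,t}\le p_{d,t}\le \hat p_{d,t}$ for all $t$, there always exists a disaggregate, feasible charging strategy for the individual EVs, i.e. individual charging powers $p^c_{v,t}$ and energy levels $e_{v,t}$ such that: $p_{d,t}=\sum_{v\in\mathcal{V}}p^c_{v,t}$ for all $t$; $0\le p^c_{v,t}\le \bar p_v$ for all $v$ and $t\in[t_v^a,t_v^d]$; $e_{v,t+1}=e_{v,t}+\eta_c p^c_{v,t}\Delta t$ for all $v$ and $t\neq T$; $e_{v,t_v^a}=e_v^a$ and $e_{v,t_v^d}\ge e_v^d$ for all $v$; $\underline e_v\le e_{v,t}\le \bar e_v$ for all $v,t$; and $p^c_{v,t}=0$ for all $v$ and $t\notin[t_v^a,t_v^d]$.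
   Context: Each EV $v\in\mathcal{V}$ has arrival time slot $t_v^a$, departure time slot $t_v^d$, initial energy $e_v^a$ at $t_v^a$, required energy $e_v^d$ at departure, maximum charging power $\bar p_v\ge 0$, energy bounds $\underline e_v\le \bar e_v$; $\eta_c>0$ is the charging efficiency and $\Delta t>0$ the slot length. The set $\mathcal{F}_c$ consists of all trajectories $\{\hat p_{d,t},\check p_{d,t}\}_t$ for which there exist $\hat p^c_{v,t},\hat e_{v,t},\check p^c_{v,t},\check e_{v,t}$ with: $\hat p_{d,t}=\sum_{v}\hat p^c_{v,t}$; $0\le\hat p^c_{v,t}\le\bar p_v$ for $t\in[t_v^a,t_v^d]$; $\hat e_{v,t+1}=\hat e_{v,t}+\eta_c\hat p^c_{v,t}\Delta t$ for $t\ne T$; $\hat e_{v,t_v^a}=e_v^a$, $\hat e_{v,t_v^d}\ge e_v^d$; $\underline e_v\le\hat e_{v,t}\le\bar e_v$; the identical constraints for the checked quantities $\check p_{d,t},\check p^c_{v,t},\check e_{v,t}$; $\check p_{d,t}\le\hat p_{d,t}$ for all $t$; and $\hat p^c_{v,t}=\check p^c_{v,t}=0$ for $t\notin[t_v^a,t_v^d]$. Problem P1 maximizes the long-run time-average expected value $\lim_{T\to\infty}\frac1T\sum_{t=1}^T\mathbb{E}[(\pi^e_t+\pi^c_t\rho_t)(\hat p_{d,t}-\check p_{d,t})]$ over $\mathcal{F}_c$, where $\pi^e_t$ is the electricity price, $\pi^c_t$ the carbon price and $\rho_t$ the grid carbon intensity at time $t$. *)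

theory Defs
  imports Complex_Main
begin

text \<open>For an EV v: arrival slot ta v, departure
slot td v, initial energy ea v, required energy ed v, maximum charging power pbar v,
energy bounds emin v and emax v; eta is the charging efficiency and dt the slot length.\<close>

definition ev_feasible ::
  "nat \<Rightarrow> real \<Rightarrow> real \<Rightarrow> nat \<Rightarrow> nat \<Rightarrow> real \<Rightarrow> real \<Rightarrow> real \<Rightarrow> real \<Rightarrow> real
   \<Rightarrow> (nat \<Rightarrow> real) \<Rightarrow> (nat \<Rightarrow> real) \<Rightarrow> bool" where
  "ev_feasible T eta dt ta td ea ed pbar emin emax pc e \<longleftrightarrow>
     (\<forall>t\<in>{ta..td}. 0 \<le> pc t \<and> pc t \<le> pbar) \<and>
     (\<forall>t\<in>{1..T}. t \<noteq> T \<longrightarrow> e (t+1) = e t + eta * pc t * dt) \<and>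
     e ta = ea \<and> e td \<ge> ed \<and>
     (\<forall>t\<in>{1..T}. emin \<le> e t \<and> e t \<le> emax) \<and>
     (\<forall>t\<in>{1..T}. t \<notin> {ta..td} \<longrightarrow> pc t = 0)"

definition disaggregates ::
  "'v set \<Rightarrow> nat \<Rightarrow> real \<Rightarrow> real \<Rightarrow> ('v \<Rightarrow> nat) \<Rightarrow> ('v \<Rightarrow> nat) \<Rightarrow> ('v \<Rightarrow> real)
   \<Rightarrow> ('v \<Rightarrow> real) \<Rightarrow> ('v \<Rightarrow> real) \<Rightarrow> ('v \<Rightarrow> real) \<Rightarrow> ('v \<Rightarrow> real)
   \<Rightarrow> (nat \<Rightarrow> real) \<Rightarrow> ('v \<Rightarrow> nat \<Rightarrow> real) \<Rightarrow> ('v \<Rightarrow> nat \<Rightarrow> real) \<Rightarrow> bool" where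
  "disaggregates V T eta dt ta td ea ed pbar emin emax pd pc e \<longleftrightarrow>
     (\<forall>t\<in>{1..T}. pd t = (\<Sum>v\<in>V. pc v t)) \<and>
     (\<forall>v\<in>V. ev_feasible T eta dt (ta v) (td v) (ea v) (ed v) (pbar v) (emin v) (emax v)
                          (pc v) (e v))"

definition in_Fc ::
  "'v set \<Rightarrow> nat \<Rightarrow> real \<Rightarrow> real \<Rightarrow> ('v \<Rightarrow> nat) \<Rightarrow> ('v \<Rightarrow> nat) \<Rightarrow> ('v \<Rightarrow> real)
   \<Rightarrow> ('v \<Rightarrow> real) \<Rightarrow> ('v \<Rightarrow> real) \<Rightarrow> ('v \<Rightarrow> real) \<Rightarrow> ('v \<Rightarrow> real)
   \<Rightarrow> (nat \<Rightarrow> real) \<Rightarrow> (nat \<Rightarrow> real) \<Rightarrow> bool" where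
  "in_Fc V T eta dt ta td ea ed pbar emin emax phat pcheck \<longleftrightarrow>
     (\<exists>hpc he cpc ce.
        disaggregates V T eta dt ta td ea ed pbar emin emax phat hpc he \<and>
        disaggregates V T eta dt ta td ea ed pbar emin emax pcheck cpc ce \<and>
        (\<forall>t\<in>{1..T}. pcheck t \<le> phat t))"

end

theory Submission
  imports Defs "HOL-Analysis.Analysis"
begin

definition uok :: "nat \<Rightarrow> real \<Rightarrow> nat \<Rightarrow> nat \<Rightarrow> real \<Rightarrow> real \<Rightarrow> real \<Rightarrow> real \<Rightarrow> (nat \<Rightarrow> real) \<Rightarrow> bool" where
  "uok T k ta td ea ed pb emx p \<longleftrightarrow>
     (\<forall>t. (ta \<le> t \<and> t \<le> td \<longrightarrow> 0 \<le> p t \<and> p t \<le> pb) \<and> (\<not> (ta \<le> t \<and> t \<le> td) \<longrightarrow> p t = 0)) \<and>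
     ed \<le> ea + k * sum p {ta..<td} \<and> ea + k * sum p {ta..<T} \<le> emx"

lemma betw:
  fixes a s e e' :: real
  assumes "0 \<le> e'" "e' \<le> e"
  shows "min a (a + e * s) \<le> a + e' * s \<and> a + e' * s \<le> max a (a + e * s)"
proof (cases "s \<ge> 0")
  case True
  then have "e' * s \<le> e * s" "0 \<le> e' * s" using assms by (auto intro: mult_right_mono)
  then show ?thesis by auto
next
  case False
  then have "e * s \<le> e' * s" "e' * s \<le> 0" using assms
    by (auto intro: mult_right_mono_neg simp: mult_nonneg_nonpos)
  then show ?thesis by auto
qed

lemma sum_move:
  fixes p w :: "nat \<Rightarrow> real"
  shows "sum (\<lambda>t. p t + e * w t) I = sum p I + e * sum w I"
  unfolding sum.distrib sum_distrib_left by simp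

lemma shrink:
  assumes k: "k > 0" and u1: "uok T k ta td ea ed pb emx p"
    and u2: "uok T k ta td ea ed pb emx (\<lambda>t. p t + e * w t)"
    and e': "0 \<le> e'" "e' \<le> e"
  shows "uok T k ta td ea ed pb emx (\<lambda>t. p t + e' * w t)"
proof -
  have b: "\<And>a s. min a (a + e * s) \<le> a + e' * s \<and> a + e' * s \<le> max a (a + e * s)"
    using betw[OF e'] by blast
  have box: "\<forall>t. (ta \<le> t \<and> t \<le> td \<longrightarrow> 0 \<le> p t + e' * w t \<and> p t + e' * w t \<le> pb) \<and>
       (\<not> (ta \<le> t \<and> t \<le> td) \<longrightarrow> p t + e' * w t = 0)"
  proof (intro allI conjI impI)
    fix t assume "ta \<le> t \<and> t \<le> td"
    then have "0 \<le> p t" "p t \<le> pb" "0 \<le> p t + e * w t" "p t + e * w t \<le> pb"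
      using u1 u2 unfolding uok_def by auto
    with b[of "p t" "w t"] show "0 \<le> p t + e' * w t" "p t + e' * w t \<le> pb" by linarith+
  next
    fix t assume "\<not> (ta \<le> t \<and> t \<le> td)"
    then have "p t = 0" "p t + e * w t = 0"
      using u1 u2 unfolding uok_def by auto
    with b[of "p t" "w t"] show "p t + e' * w t = 0" by linarith
  qed
  have s1: "ed \<le> ea + k * (sum p {ta..<td} + e' * sum w {ta..<td})"
  proof -
    have "ed \<le> ea + k * sum p {ta..<td}" "ed \<le> ea + k * (sum p {ta..<td} + e * sum w {ta..<td})"
      using u1 u2 unfolding uok_def sum_move by auto
    moreover note b[of "sum p {ta..<td}" "sum w {ta..<td}"]
    ultimately show ?thesis using k
      by (smt (verit, ccfv_SIG) mult_left_mono)
  qed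
  have s2: "ea + k * (sum p {ta..<T} + e' * sum w {ta..<T}) \<le> emx"
  proof -
    have "ea + k * sum p {ta..<T} \<le> emx" "ea + k * (sum p {ta..<T} + e * sum w {ta..<T}) \<le> emx"
      using u1 u2 unfolding uok_def sum_move by auto
    moreover note b[of "sum p {ta..<T}" "sum w {ta..<T}"]
    ultimately show ?thesis using k
      by (smt (verit, ccfv_SIG) mult_left_mono)
  qed
  show ?thesis using box s1 s2 unfolding uok_def sum_move by blast
qed

lemma sum_le_J:
  fixes D :: "nat \<Rightarrow> real"
  assumes "finite R" "finite J" "\<forall>t\<in>R-J. D t \<le> 0" "\<forall>t\<in>J-R. D t \<ge> 0"
  shows "sum D R \<le> sum D J"
proof -
  have "sum D R = sum D (R \<inter> J) + sum D (R - J)" using assms by (simp add: sum.Int_Diff)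
  moreover have "sum D J = sum D (J \<inter> R) + sum D (J - R)" using assms by (simp add: sum.Int_Diff)
  moreover have "sum D (R - J) \<le> 0" using assms by (intro sum_nonpos) auto
  moreover have "sum D (J - R) \<ge> 0" using assms by (intro sum_nonneg) auto
  ultimately show ?thesis by (simp add: Int_commute)
qed


lemma sum_w:
  fixes p :: "nat \<Rightarrow> real"
  assumes "finite I"
  shows "sum (\<lambda>t. p t + e * ((if t = t0 then 1 else 0) - s * (if t = t1 then 1 else 0))) I
     = sum p I + e * ((if t0 \<in> I then 1 else 0) - s * (if t1 \<in> I then 1 else 0))"
  using assms by (simp add: sum_move sum_subtractf sum_distrib_left[symmetric])

lemma unit_move:
  fixes p q :: "nat \<Rightarrow> real"
  assumes k: "k > 0" and win: "1 \<le> ta" "ta \<le> td" "td \<le> T"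
    and up: "uok T k ta td ea ed pb emx p" and uq: "uok T k ta td ea ed pb emx q"
    and R: "R \<subseteq> {1..T}" and pos: "(\<Sum>t\<in>R. q t - p t) > 0"
  shows "\<exists>t0\<in>R. \<exists>t1 s e. e > 0 \<and> (s = 0 \<or> (s = 1 \<and> t1 \<in> {1..T} - R)) \<and>
     uok T k ta td ea ed pb emx (\<lambda>t. p t + e * ((if t = t0 then 1 else 0) - s * (if t = t1 then 1 else 0)))"
proof (rule ccontr)
  assume nm: "\<not> ?thesis"
  define D where "D t = q t - p t" for t
  define S1 where "S1 = sum p {ta..<td}"
  define S2 where "S2 = sum p {ta..<T}"
  have pw: "\<And>t. ta \<le> t \<and> t \<le> td \<Longrightarrow> 0 \<le> p t \<and> p t \<le> pb"
    "\<And>t. \<not> (ta \<le> t \<and> t \<le> td) \<Longrightarrow> p t = 0"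
    and qw: "\<And>t. ta \<le> t \<and> t \<le> td \<Longrightarrow> 0 \<le> q t \<and> q t \<le> pb"
    "\<And>t. \<not> (ta \<le> t \<and> t \<le> td) \<Longrightarrow> q t = 0"
    and pS: "ed \<le> ea + k * S1" "ea + k * S2 \<le> emx"
    and qS: "ed \<le> ea + k * sum q {ta..<td}" "ea + k * sum q {ta..<T} \<le> emx"
    using up uq unfolding uok_def S1_def S2_def by auto
  have Dwin: "D t \<noteq> 0 \<Longrightarrow> ta \<le> t \<and> t \<le> td" for t
    using pw(2) qw(2) unfolding D_def by force
  have raise: "t0 \<in> {ta..<T} \<and> ea + k * S2 = emx" if t0R: "t0 \<in> R" and Dp: "D t0 > 0" for t0
  proof (rule ccontr)
    assume nr: "\<not> (t0 \<in> {ta..<T} \<and> ea + k * S2 = emx)"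
    define sl where "sl = (if t0 \<in> {ta..<T} then (emx - ea - k * S2) / k else 1)"
    have slp: "sl > 0" using nr pS k unfolding sl_def by (auto simp: field_simps)
    have ksl: "t0 \<in> {ta..<T} \<Longrightarrow> k * sl = emx - ea - k * S2" using k unfolding sl_def by auto
    define e where "e = min (D t0) sl"
    have ep: "e > 0" using slp Dp unfolding e_def by auto
    have wt0: "ta \<le> t0 \<and> t0 \<le> td" using Dwin Dp by force
    have "uok T k ta td ea ed pb emx (\<lambda>t. p t + e * ((if t = t0 then 1 else 0) - 0 * (if t = t0 then 1 else 0)))"
      unfolding uok_def
    proof (intro conjI allI impI)
      fix t assume "ta \<le> t \<and> t \<le> td"
      then show "0 \<le> p t + e * ((if t = t0 then 1 else 0) - 0 * (if t = t0 then 1 else 0))"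
        "p t + e * ((if t = t0 then 1 else 0) - 0 * (if t = t0 then 1 else 0)) \<le> pb"
        using pw(1)[of t] qw(1)[of t] ep unfolding e_def D_def by auto
    next
      fix t assume "\<not> (ta \<le> t \<and> t \<le> td)"
      then show "p t + e * ((if t = t0 then 1 else 0) - 0 * (if t = t0 then 1 else 0)) = 0"
        using pw(2)[of t] wt0 by auto
    next
      show "ed \<le> ea + k * (\<Sum>t = ta..<td. p t + e * ((if t = t0 then 1 else 0) - 0 * (if t = t0 then 1 else 0)))"
        unfolding sum_w[OF finite_atLeastLessThan] S1_def[symmetric]
        using pS ep k by (auto simp: algebra_simps) (smt (verit) mult_pos_pos)
    next
      have "e \<le> sl" unfolding e_def by auto
      then have "k * e \<le> k * sl" using k by auto
      then show "ea + k * (\<Sum>t = ta..<T. p t + e * ((if t = t0 then 1 else 0) - 0 * (if t = t0 then 1 else 0))) \<le> emx"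
        unfolding sum_w[OF finite_atLeastLessThan] S2_def[symmetric]
        using pS ep k ksl by (auto simp: algebra_simps)
    qed
    then show False using nm t0R ep by blast
  qed
  have shift: "(t1 \<notin> {ta..<T} \<and> t0 \<in> {ta..<T} \<and> ea + k * S2 = emx) \<or>
      (t1 \<in> {ta..<td} \<and> t0 \<notin> {ta..<td} \<and> ed = ea + k * S1)"
    if t0R: "t0 \<in> R" and Dp: "D t0 > 0" and t1R: "t1 \<in> {1..T} - R" and Dn: "D t1 < 0" for t0 t1
  proof (rule ccontr)
    assume nb: "\<not> ?thesis"
    define s1 where "s1 = (if t1 \<in> {ta..<td} \<and> t0 \<notin> {ta..<td} then (ea + k * S1 - ed) / k else 1)"
    define s2 where "s2 = (if t1 \<notin> {ta..<T} \<and> t0 \<in> {ta..<T} then (emx - ea - k * S2) / k else 1)"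
    have s1p: "s1 > 0" using nb pS k unfolding s1_def by (auto simp: field_simps)
    have s2p: "s2 > 0" using nb pS k unfolding s2_def by (auto simp: field_simps)
    have ks1: "t1 \<in> {ta..<td} \<and> t0 \<notin> {ta..<td} \<Longrightarrow> k * s1 = ea + k * S1 - ed" using k unfolding s1_def by auto
    have ks2: "t1 \<notin> {ta..<T} \<and> t0 \<in> {ta..<T} \<Longrightarrow> k * s2 = emx - ea - k * S2" using k unfolding s2_def by auto
    define e where "e = min (min (D t0) (- D t1)) (min s1 s2)"
    have ep: "e > 0" using s1p s2p Dp Dn unfolding e_def by auto
    have e1: "e \<le> s1" "e \<le> s2" "e \<le> D t0" "e \<le> - D t1" unfolding e_def by auto
    have ke: "e * k \<le> s1 * k" "e * k \<le> s2 * k" "0 < e * k" "e * k \<le> k * s1" "e * k \<le> k * s2" using e1 k ep by (auto simp: mult.commute)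
    have wt0: "ta \<le> t0 \<and> t0 \<le> td" using Dwin Dp by force
    have wt1: "ta \<le> t1 \<and> t1 \<le> td" using Dwin Dn by force
    have ne: "t0 \<noteq> t1" using t0R t1R by auto
    have "uok T k ta td ea ed pb emx (\<lambda>t. p t + e * ((if t = t0 then 1 else 0) - 1 * (if t = t1 then 1 else 0)))"
      unfolding uok_def
    proof (intro conjI allI impI)
      fix t assume "ta \<le> t \<and> t \<le> td"
      then show "0 \<le> p t + e * ((if t = t0 then 1 else 0) - 1 * (if t = t1 then 1 else 0))"
        "p t + e * ((if t = t0 then 1 else 0) - 1 * (if t = t1 then 1 else 0)) \<le> pb"
        using pw(1)[of t] qw(1)[of t] ep e1 ne unfolding D_def by auto
    next
      fix t assume "\<not> (ta \<le> t \<and> t \<le> td)"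
      then show "p t + e * ((if t = t0 then 1 else 0) - 1 * (if t = t1 then 1 else 0)) = 0"
        using pw(2)[of t] wt0 wt1 by auto
    next
      show "ed \<le> ea + k * (\<Sum>t = ta..<td. p t + e * ((if t = t0 then 1 else 0) - 1 * (if t = t1 then 1 else 0)))"
        unfolding sum_w[OF finite_atLeastLessThan] S1_def[symmetric]
        using pS ep k ks1 by (auto simp: algebra_simps) (insert ke e1, linarith)+
    next
      show "ea + k * (\<Sum>t = ta..<T. p t + e * ((if t = t0 then 1 else 0) - 1 * (if t = t1 then 1 else 0))) \<le> emx"
        unfolding sum_w[OF finite_atLeastLessThan] S2_def[symmetric]
        using pS ep k ks2 by (auto simp: algebra_simps) (insert ke e1, linarith)+
    qed
    then show False using nm t0R t1R ep by blast
  qed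
  have Rfin: "finite R" using R finite_subset by blast
  have I2sub: "{ta..<T} \<subseteq> {1..T}" using win by auto
  show False
  proof (cases "\<exists>t0\<in>R. D t0 > 0")
    case False
    then have "sum D R \<le> 0" by (intro sum_nonpos) (auto simp: not_less)
    then show False using pos unfolding D_def by simp
  next
    case True
    then obtain t0 where t0R: "t0 \<in> R" and Dt0: "D t0 > 0" by blast
    have S2eq: "ea + k * S2 = emx" using raise[OF t0R Dt0] by blast
    have I2D: "sum D {ta..<T} \<le> 0"
    proof -
      have "k * sum q {ta..<T} \<le> k * S2" using qS S2eq by linarith
      then have "sum q {ta..<T} \<le> S2" using k by simp
      then show ?thesis unfolding D_def S2_def by (simp add: sum_subtractf)
    qed
    have Pin: "\<And>t. t \<in> R \<Longrightarrow> D t > 0 \<Longrightarrow> t \<in> {ta..<T}" using raise by blast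
    show False
    proof (cases "\<exists>t1\<in>{ta..<T} - R. D t1 < 0")
      case False
      have "sum D R \<le> sum D {ta..<T}"
      proof (rule sum_le_J[OF Rfin])
        show "finite {ta..<T}" by simp
        show "\<forall>t\<in>R - {ta..<T}. D t \<le> 0"
        proof
          fix t assume a: "t \<in> R - {ta..<T}"
          show "D t \<le> 0"
          proof (rule ccontr)
            assume "\<not> D t \<le> 0"
            then have "D t > 0" by simp
            then show False using Pin[of t] a by blast
          qed
        qed
        show "\<forall>t\<in>{ta..<T} - R. 0 \<le> D t"
        proof
          fix t assume a: "t \<in> {ta..<T} - R"
          show "0 \<le> D t"
          proof (rule ccontr)
            assume "\<not> 0 \<le> D t"
            then have "D t < 0" by simp
            then show False using False a by blast
          qed
        qed
      qed
      then show False using I2D pos unfolding D_def by simp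
    next
      case True
      then obtain t1 where t1N: "t1 \<in> {ta..<T} - R" and Dt1: "D t1 < 0" by blast
      have t1R: "t1 \<in> {1..T} - R" using t1N I2sub by auto
      have sh1: "t1 \<in> {ta..<td} \<and> t0 \<notin> {ta..<td} \<and> ed = ea + k * S1"
        using shift[OF t0R Dt0 t1R Dt1] t1N by blast
      have P1: "\<And>t. t \<in> R \<Longrightarrow> D t > 0 \<Longrightarrow> t \<notin> {ta..<td}"
        using shift t1R Dt1 t1N by blast
      have N1: "\<And>t. t \<in> {ta..<T} - R \<Longrightarrow> D t < 0 \<Longrightarrow> t \<in> {ta..<td}"
      proof -
        fix t assume a1: "t \<in> {ta..<T} - R" and a2: "D t < 0"
        have "t \<in> {1..T} - R" using a1 I2sub by auto
        then show "t \<in> {ta..<td}" using shift[OF t0R Dt0 _ a2] a1 by blast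
      qed
      have I1D: "sum D {ta..<td} \<ge> 0"
      proof -
        have "k * S1 \<le> k * sum q {ta..<td}" using qS sh1 by linarith
        then have "S1 \<le> sum q {ta..<td}" using k by simp
        then show ?thesis unfolding D_def S1_def by (simp add: sum_subtractf)
      qed
      have sub: "{ta..<td} \<subseteq> {ta..<T}" using win by auto
      have JD: "sum D ({ta..<T} - {ta..<td}) \<le> 0"
        using I2D I1D sum_diff[OF finite_atLeastLessThan sub, of D] by simp
      have "sum D R \<le> sum D ({ta..<T} - {ta..<td})"
      proof (rule sum_le_J[OF Rfin])
        show "finite ({ta..<T} - {ta..<td})" by simp
        show "\<forall>t\<in>R - ({ta..<T} - {ta..<td}). D t \<le> 0"
        proof
          fix t assume a: "t \<in> R - ({ta..<T} - {ta..<td})"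
          show "D t \<le> 0"
          proof (rule ccontr)
            assume "\<not> D t \<le> 0"
            then have "D t > 0" by simp
            then show False using Pin[of t] P1[of t] a by blast
          qed
        qed
        show "\<forall>t\<in>{ta..<T} - {ta..<td} - R. 0 \<le> D t"
        proof
          fix t assume a: "t \<in> {ta..<T} - {ta..<td} - R"
          show "0 \<le> D t"
          proof (rule ccontr)
            assume "\<not> 0 \<le> D t"
            then have "D t < 0" by simp
            then show False using N1[of t] a by blast
          qed
        qed
      qed
      then show False using JD pos unfolding D_def by simp
    qed
  qed
qed


lemma feas_to_uok:
  assumes f: "ev_feasible T eta dt ta td ea ed pbar emin emax pc e"
    and win: "1 \<le> ta" "ta \<le> td" "td \<le> T"
  shows "emin \<le> ea \<and> uok T (eta * dt) ta td ea ed pbar emax (\<lambda>t. if ta \<le> t \<and> t \<le> td then pc t else 0)"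
proof -
  have box: "\<forall>t\<in>{ta..td}. 0 \<le> pc t \<and> pc t \<le> pbar"
    and rec: "\<forall>t\<in>{1..T}. t \<noteq> T \<longrightarrow> e (t+1) = e t + eta * pc t * dt"
    and eta: "e ta = ea" and etd: "e td \<ge> ed"
    and bnd: "\<forall>t\<in>{1..T}. emin \<le> e t \<and> e t \<le> emax"
    and zer: "\<forall>t\<in>{1..T}. t \<notin> {ta..td} \<longrightarrow> pc t = 0"
    using f unfolding ev_feasible_def by auto
  have en: "ta + n \<le> T \<longrightarrow> e (ta + n) = ea + eta * dt * sum pc {ta..<ta+n}" for n
  proof (induction n)
    case 0
    then show ?case using eta by simp
  next
    case (Suc n)
    show ?case
    proof
      assume a: "ta + Suc n \<le> T"
      then have "e (ta + n + 1) = e (ta + n) + eta * pc (ta + n) * dt"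
        using rec win by auto
      then show "e (ta + Suc n) = ea + eta * dt * sum pc {ta..<ta + Suc n}"
        using Suc a by (simp add: algebra_simps)
    qed
  qed
  define p where "p t = (if ta \<le> t \<and> t \<le> td then pc t else 0)" for t
  have peq: "t \<in> {1..T} \<Longrightarrow> p t = pc t" for t using zer unfolding p_def by auto
  have s1: "sum p {ta..<td} = sum pc {ta..<td}"
    using win by (intro sum.cong) (auto simp: peq)
  have s2: "sum p {ta..<T} = sum pc {ta..<T}"
    using win by (intro sum.cong) (auto simp: peq)
  have etd2: "e td = ea + eta * dt * sum pc {ta..<td}"
    using en[of "td - ta"] win by simp
  have eT: "e T = ea + eta * dt * sum pc {ta..<T}"
    using en[of "T - ta"] win by simp
  have "emin \<le> ea" using bnd eta win by force
  moreover have "emax \<ge> e T" using bnd win by auto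
  moreover have "uok T (eta * dt) ta td ea ed pbar emax p"
    unfolding uok_def s1 s2
  proof (intro conjI allI impI)
    fix t assume "ta \<le> t \<and> t \<le> td"
    then show "0 \<le> p t" "p t \<le> pbar" using box unfolding p_def by auto
  next
    fix t assume "\<not> (ta \<le> t \<and> t \<le> td)"
    then show "p t = 0" unfolding p_def by auto
  next
    show "ed \<le> ea + eta * dt * sum pc {ta..<td}" using etd etd2 by simp
    show "ea + eta * dt * sum pc {ta..<T} \<le> emax" using eT \<open>emax \<ge> e T\<close> by simp
  qed
  ultimately show ?thesis unfolding p_def by simp
qed

lemma uok_to_feas:
  assumes u: "uok T (eta * dt) ta td ea ed pbar emax p" and k: "eta * dt > 0"
    and em: "emin \<le> ea"
    and win: "1 \<le> ta" "ta \<le> td" "td \<le> T"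
  shows "ev_feasible T eta dt ta td ea ed pbar emin emax p (\<lambda>t. ea + eta * dt * sum p {ta..<t})"
proof -
  have pw: "\<And>t. ta \<le> t \<and> t \<le> td \<Longrightarrow> 0 \<le> p t \<and> p t \<le> pbar"
    "\<And>t. \<not> (ta \<le> t \<and> t \<le> td) \<Longrightarrow> p t = 0"
    and S: "ed \<le> ea + eta * dt * sum p {ta..<td}" "ea + eta * dt * sum p {ta..<T} \<le> emax"
    using u unfolding uok_def by auto
  have pnn: "0 \<le> p t" for t using pw[of t] by (cases "ta \<le> t \<and> t \<le> td") auto
  have rec: "ea + eta * dt * sum p {ta..<t+1} = (ea + eta * dt * sum p {ta..<t}) + eta * p t * dt" for t
  proof (cases "ta \<le> t")
    case True
    then show ?thesis by (simp add: algebra_simps)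
  next
    case False
    then show ?thesis using pw(2)[of t] by simp
  qed
  have bnd: "emin \<le> ea + eta * dt * sum p {ta..<t} \<and> ea + eta * dt * sum p {ta..<t} \<le> emax"
    if "t \<in> {1..T}" for t
  proof -
    have "0 \<le> sum p {ta..<t}" using pnn by (simp add: sum_nonneg)
    moreover have "sum p {ta..<t} \<le> sum p {ta..<T}"
      using that pnn by (intro sum_mono2) auto
    ultimately have "0 \<le> eta * dt * sum p {ta..<t}" "eta * dt * sum p {ta..<t} \<le> eta * dt * sum p {ta..<T}"
      using k by (auto intro: mult_left_mono)
    then show ?thesis using em S(2) by linarith
  qed
  show ?thesis unfolding ev_feasible_def
  proof (intro conjI ballI impI)
    fix t assume "t \<in> {ta..td}"
    then show "0 \<le> p t" "p t \<le> pbar" using pw(1)[of t] by auto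
  next
    fix t assume "t \<in> {1..T}" "t \<noteq> T"
    show "ea + eta * dt * sum p {ta..<t + 1} = ea + eta * dt * sum p {ta..<t} + eta * p t * dt"
      by (rule rec)
  next
    show "ea + eta * dt * sum p {ta..<ta} = ea" by simp
    show "ed \<le> ea + eta * dt * sum p {ta..<td}" by (rule S(1))
  next
    fix t assume "t \<in> {1..T}"
    then show "emin \<le> ea + eta * dt * sum p {ta..<t}" "ea + eta * dt * sum p {ta..<t} \<le> emax"
      using bnd by auto
  next
    fix t assume "t \<in> {1..T}" "t \<notin> {ta..td}"
    then show "p t = 0" using pw(2)[of t] by auto
  qed
qed


lemma coord_cont: "continuous_on S (\<lambda>c::'v \<Rightarrow> nat \<Rightarrow> real. c v t)"
proof -
  have "continuous_on S (\<lambda>c::'v \<Rightarrow> nat \<Rightarrow> real. c v)"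
    using continuous_on_product_then_coordinatewise[OF continuous_on_id, of S v] by simp
  then show ?thesis using continuous_on_product_then_coordinatewise by fast
qed

lemma main_C:
  fixes V :: "'v set" and a b :: "'v \<Rightarrow> nat \<Rightarrow> real" and y :: "nat \<Rightarrow> real"
    and ta td :: "'v \<Rightarrow> nat" and ea ed pb emx :: "'v \<Rightarrow> real"
  assumes fin: "finite V" and k: "k > 0"
    and win: "\<forall>v\<in>V. 1 \<le> ta v \<and> ta v \<le> td v \<and> td v \<le> T"
    and ua: "\<forall>v\<in>V. uok T k (ta v) (td v) (ea v) (ed v) (pb v) (emx v) (a v)"
    and ub: "\<forall>v\<in>V. uok T k (ta v) (td v) (ea v) (ed v) (pb v) (emx v) (b v)"
    and xy: "\<forall>t\<in>{1..T}. (\<Sum>v\<in>V. a v t) \<le> y t \<and> y t \<le> (\<Sum>v\<in>V. b v t)"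
  shows "\<exists>c. (\<forall>v\<in>V. uok T k (ta v) (td v) (ea v) (ed v) (pb v) (emx v) (c v)) \<and>
             (\<forall>t\<in>{1..T}. (\<Sum>v\<in>V. c v t) = y t)"
proof -
  let ?U = "\<lambda>v p. uok T k (ta v) (td v) (ea v) (ed v) (pb v) (emx v) p"
  define K where "K v t = (if v \<in> V \<and> ta v \<le> t \<and> t \<le> td v then {0..pb v} else {0::real})" for v t
  define Box where "Box = Pi UNIV (\<lambda>v. Pi UNIV (K v))"
  define Cs where "Cs = {c::'v \<Rightarrow> nat \<Rightarrow> real. (\<forall>v\<in>V. ed v \<le> ea v + k * sum (c v) {ta v..<td v} \<and>
      ea v + k * sum (c v) {ta v..<T} \<le> emx v) \<and> (\<forall>t\<in>{1..T}. (\<Sum>v\<in>V. c v t) \<le> y t)}"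
  define F where "F = Box \<inter> Cs"
  have memB: "c \<in> Box \<longleftrightarrow> (\<forall>v t. c v t \<in> K v t)" for c
    unfolding Box_def by (simp add: Pi_def)
  have memF: "c \<in> F \<longleftrightarrow> (\<forall>v\<in>V. ?U v (c v)) \<and> (\<forall>v. v \<notin> V \<longrightarrow> (\<forall>t. c v t = 0)) \<and>
      (\<forall>t\<in>{1..T}. (\<Sum>v\<in>V. c v t) \<le> y t)" for c
    unfolding F_def Int_iff memB Cs_def mem_Collect_eq K_def uok_def
    by (auto split: if_splits)
  have cK: "compact (K v t)" for v t unfolding K_def by auto
  have cB: "compact Box"
  proof -
    have "compact (Pi UNIV (K v))" for v
      using compactin_PiE[of "\<lambda>_. euclidean" UNIV "K v"] cK
      by (simp add: euclidean_product_topology PiE_UNIV_domain)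
    then show ?thesis unfolding Box_def
      using compactin_PiE[of "\<lambda>_. euclidean" UNIV "\<lambda>v. Pi UNIV (K v)"]
      by (simp add: euclidean_product_topology PiE_UNIV_domain)
  qed
  have clC: "closed Cs"
  proof -
    have "Cs = (\<Inter>v\<in>V. {c. ed v \<le> ea v + k * sum (c v) {ta v..<td v}} \<inter> {c. ea v + k * sum (c v) {ta v..<T} \<le> emx v})
       \<inter> (\<Inter>t\<in>{1..T}. {c. (\<Sum>v\<in>V. c v t) \<le> y t})"
      unfolding Cs_def by auto
    moreover have "closed {c::'v \<Rightarrow> nat \<Rightarrow> real. ed v \<le> ea v + k * sum (c v) {ta v..<td v}}" for v
      by (intro closed_Collect_le continuous_intros coord_cont)
    moreover have "closed {c::'v \<Rightarrow> nat \<Rightarrow> real. ea v + k * sum (c v) {ta v..<T} \<le> emx v}" for v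
      by (intro closed_Collect_le continuous_intros coord_cont)
    moreover have "closed {c::'v \<Rightarrow> nat \<Rightarrow> real. (\<Sum>v\<in>V. c v t) \<le> y t}" for t
      by (intro closed_Collect_le continuous_intros coord_cont)
    ultimately show ?thesis by (simp add: closed_INT closed_Int)
  qed
  have cF: "compact F" unfolding F_def using cB clC by blast
  define a0 where "a0 v = (if v \<in> V then a v else (\<lambda>t. 0))" for v
  have "a0 \<in> F" unfolding memF
  proof (intro conjI ballI allI impI)
    fix v assume "v \<in> V" then show "?U v (a0 v)" using ua a0_def by auto
  next
    fix v t assume "v \<notin> V" then show "a0 v t = 0" unfolding a0_def by auto
  next
    fix t assume "t \<in> {1..T}"
    moreover have "(\<Sum>v\<in>V. a0 v t) = (\<Sum>v\<in>V. a v t)" unfolding a0_def by (intro sum.cong) auto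
    ultimately show "(\<Sum>v\<in>V. a0 v t) \<le> y t" using xy by auto
  qed
  then have Fne: "F \<noteq> {}" by auto
  define \<Phi> where "\<Phi> c = (\<Sum>t\<in>{1..T}. (y t - (\<Sum>v\<in>V. c v t))\<^sup>2)" for c :: "'v \<Rightarrow> nat \<Rightarrow> real"
  have "continuous_on F \<Phi>" unfolding \<Phi>_def
    by (intro continuous_intros coord_cont)
  then obtain c where cinF: "c \<in> F" and cmin: "\<forall>c'\<in>F. \<Phi> c \<le> \<Phi> c'"
    using continuous_attains_inf[OF cF Fne] by blast
  have cU: "\<forall>v\<in>V. ?U v (c v)" and c0: "\<forall>v. v \<notin> V \<longrightarrow> (\<forall>t. c v t = 0)"
    and cy: "\<forall>t\<in>{1..T}. (\<Sum>v\<in>V. c v t) \<le> y t"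
    using cinF unfolding memF by auto
  define d where "d t = y t - (\<Sum>v\<in>V. c v t)" for t
  have dnn: "t \<in> {1..T} \<Longrightarrow> 0 \<le> d t" for t using cy unfolding d_def by auto
  have d0: "\<forall>t\<in>{1..T}. d t = 0"
  proof (rule ccontr)
    assume "\<not> (\<forall>t\<in>{1..T}. d t = 0)"
    then obtain t' where t': "t' \<in> {1..T}" "d t' \<noteq> 0" by blast
    define M where "M = Max (d ` {1..T})"
    have Mge: "t \<in> {1..T} \<Longrightarrow> d t \<le> M" for t unfolding M_def by (intro Max_ge) auto
    have Mpos: "M > 0" using Mge[OF t'(1)] dnn[OF t'(1)] t'(2) by linarith
    have "M \<in> d ` {1..T}" unfolding M_def using t'(1) by (intro Max_in) auto
    then obtain tm where tm: "tm \<in> {1..T}" "d tm = M" by auto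
    define R where "R = {t\<in>{1..T}. d t = M}"
    have Rsub: "R \<subseteq> {1..T}" unfolding R_def by auto
    have Rfin: "finite R" using Rsub finite_subset by blast
    have Rne: "R \<noteq> {}" using tm unfolding R_def by auto
    have each: "(\<Sum>t\<in>R. b v t - c v t) \<le> 0" if vV: "v \<in> V" for v
    proof (rule ccontr)
      assume "\<not> (\<Sum>t\<in>R. b v t - c v t) \<le> 0"
      then have pos: "(\<Sum>t\<in>R. b v t - c v t) > 0" by simp
      have wv: "1 \<le> ta v" "ta v \<le> td v" "td v \<le> T" using win vV by auto
      obtain t0 t1 s e where t0R: "t0 \<in> R" and ep: "e > 0"
        and sc: "s = 0 \<or> (s = 1 \<and> t1 \<in> {1..T} - R)"
        and mv: "?U v (\<lambda>t. c v t + e * ((if t = t0 then 1 else 0) - s * (if t = t1 then 1 else 0)))"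
        using unit_move[OF k wv cU[rule_format, OF vV] ub[rule_format, OF vV] Rsub pos] by blast
      define w where "w t = (if t = t0 then 1 else 0) - s * (if t = t1 then 1 else (0::real))" for t
      define g where "g = M - s * d t1"
      have t0T: "t0 \<in> {1..T}" and dt0: "d t0 = M" using t0R unfolding R_def by auto
      have gpos: "g > 0" and gM: "g \<le> M"
      proof -
        have "g > 0 \<and> g \<le> M"
        proof (cases "s = 0")
          case True then show ?thesis using Mpos unfolding g_def by simp
        next
          case False
          then have s1: "s = 1" and t1R: "t1 \<in> {1..T} - R" using sc by auto
          then have "d t1 \<noteq> M" "d t1 \<le> M" "0 \<le> d t1" using Mge dnn unfolding R_def by auto
          then show ?thesis unfolding g_def s1 by simp
        qed
        then show "g > 0" "g \<le> M" by auto
      qed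
      define e' where "e' = min e (g / 2)"
      have e'p: "e' > 0" and e'e: "e' \<le> e" and e'g: "e' \<le> g / 2"
        using ep gpos unfolding e'_def by auto
      have Ue': "?U v (\<lambda>t. c v t + e' * w t)"
        using shrink[OF k cU[rule_format, OF vV] mv[folded w_def] _ e'e] e'p by simp
      define c' where "c' = c(v := (\<lambda>t. c v t + e' * w t))"
      have sumc': "(\<Sum>u\<in>V. c' u t) = (\<Sum>u\<in>V. c u t) + e' * w t" for t
      proof -
        have "(\<Sum>u\<in>V. c' u t) = (\<Sum>u\<in>V. c u t + (if u = v then e' * w t else 0))"
          unfolding c'_def by (intro sum.cong) auto
        also have "\<dots> = (\<Sum>u\<in>V. c u t) + e' * w t"
          using fin vV by (simp add: sum.distrib)
        finally show ?thesis .
      qed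
      have sge: "s \<ge> 0" using sc by auto
      have wle: "w t \<le> (if t = t0 then 1 else 0)" for t
        unfolding w_def using sge by auto
      have c'F: "c' \<in> F" unfolding memF
      proof (intro conjI ballI allI impI)
        fix u assume "u \<in> V" then show "?U u (c' u)" using cU Ue' unfolding c'_def by auto
      next
        fix u t assume "u \<notin> V" then show "c' u t = 0" using c0 vV unfolding c'_def by auto
      next
        fix t assume tT: "t \<in> {1..T}"
        show "(\<Sum>u\<in>V. c' u t) \<le> y t"
        proof (cases "t = t0")
          case True
          have "e' * w t \<le> e' * 1" using wle[of t] True e'p by (intro mult_left_mono) auto
          moreover have "e' \<le> d t" using True dt0 e'g gM gpos by simp
          ultimately show ?thesis unfolding sumc' d_def by simp
        next
          case False
          have "e' * w t \<le> 0" using wle[of t] False e'p by (simp add: mult_nonneg_nonpos)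
          then show ?thesis unfolding sumc' using cy tT by fastforce
        qed
      qed
      have Phi': "\<Phi> c' = \<Phi> c - 2 * e' * (\<Sum>t\<in>{1..T}. d t * w t) + e'\<^sup>2 * (\<Sum>t\<in>{1..T}. (w t)\<^sup>2)"
      proof -
        have "\<Phi> c' = (\<Sum>t\<in>{1..T}. (d t)\<^sup>2 - 2 * e' * (d t * w t) + e'\<^sup>2 * (w t)\<^sup>2)"
          unfolding \<Phi>_def sumc' d_def by (intro sum.cong) (auto simp: power2_eq_square algebra_simps)
        also have "\<dots> = \<Phi> c - 2 * e' * (\<Sum>t\<in>{1..T}. d t * w t) + e'\<^sup>2 * (\<Sum>t\<in>{1..T}. (w t)\<^sup>2)"
          unfolding \<Phi>_def d_def[symmetric]
          by (simp add: sum.distrib sum_subtractf sum_distrib_left)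
        finally show ?thesis .
      qed
      have Sdw: "(\<Sum>t\<in>{1..T}. d t * w t) = g"
      proof (cases "s = 0")
        case True
        then have "(\<Sum>t\<in>{1..T}. d t * w t) = (\<Sum>t\<in>{1..T}. if t = t0 then d t0 else 0)"
          unfolding w_def by (intro sum.cong) auto
        then show ?thesis using t0T dt0 True unfolding g_def by simp
      next
        case False
        then have s1: "s = 1" and t1R: "t1 \<in> {1..T} - R" using sc by auto
        have "(\<Sum>t\<in>{1..T}. d t * w t) = (\<Sum>t\<in>{1..T}. (if t = t0 then d t0 else 0) - (if t = t1 then d t1 else 0))"
          unfolding w_def s1 by (intro sum.cong) auto
        also have "\<dots> = d t0 - d t1" using t0T t1R by (simp add: sum_subtractf)
        finally show ?thesis using dt0 unfolding g_def s1 by simp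
      qed
      have Sww: "(\<Sum>t\<in>{1..T}. (w t)\<^sup>2) \<le> 2"
      proof (cases "s = 0")
        case True
        then have "(\<Sum>t\<in>{1..T}. (w t)\<^sup>2) = (\<Sum>t\<in>{1..T}. if t = t0 then 1 else 0)"
          unfolding w_def by (intro sum.cong) auto
        then show ?thesis using t0T by simp
      next
        case False
        then have s1: "s = 1" and t1R: "t1 \<in> {1..T} - R" using sc by auto
        then have ne: "t0 \<noteq> t1" using t0R by auto
        have "(\<Sum>t\<in>{1..T}. (w t)\<^sup>2) = (\<Sum>t\<in>{1..T}. (if t = t0 then 1 else 0) + (if t = t1 then 1 else 0))"
          unfolding w_def s1 using ne by (intro sum.cong) auto
        also have "\<dots> = 2" using t0T t1R by (simp add: sum.distrib)
        finally show ?thesis by simp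
      qed
      have "e'\<^sup>2 * (\<Sum>t\<in>{1..T}. (w t)\<^sup>2) \<le> e'\<^sup>2 * 2" using Sww by (intro mult_left_mono) auto
      moreover have "e'\<^sup>2 * 2 < 2 * e' * g"
      proof -
        have "e' < g" using e'g gpos by linarith
        then have "e' * e' < e' * g" using e'p by simp
        then show ?thesis by (simp add: power2_eq_square)
      qed
      ultimately have "\<Phi> c' < \<Phi> c" unfolding Phi' Sdw by linarith
      then show False using cmin c'F by force
    qed
    have "(\<Sum>v\<in>V. \<Sum>t\<in>R. b v t - c v t) \<le> 0" by (rule sum_nonpos, rule each)
    moreover have "(\<Sum>v\<in>V. \<Sum>t\<in>R. b v t - c v t) = (\<Sum>t\<in>R. (\<Sum>v\<in>V. b v t) - (\<Sum>v\<in>V. c v t))"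
      by (simp add: sum.swap[of _ V R] sum_subtractf)
    moreover have "(\<Sum>t\<in>R. (\<Sum>v\<in>V. b v t) - (\<Sum>v\<in>V. c v t)) > 0"
    proof (rule sum_pos[OF Rfin Rne])
      fix t assume tR: "t \<in> R"
      then have "t \<in> {1..T}" "d t = M" unfolding R_def by auto
      then show "0 < (\<Sum>v\<in>V. b v t) - (\<Sum>v\<in>V. c v t)" using xy Mpos unfolding d_def by force
    qed
    ultimately show False by linarith
  qed
  show ?thesis using cU d0 unfolding d_def by auto
qed


theorem proposition1:
  fixes V :: "'v set" and T :: nat and eta dt :: real
    and ta td :: "'v \<Rightarrow> nat" and ea ed pbar emin emax :: "'v \<Rightarrow> real"
    and phat pcheck pd :: "nat \<Rightarrow> real"
  assumes "finite V"
    and "eta > 0" and "dt > 0"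
    and "\<forall>v\<in>V. 1 \<le> ta v \<and> ta v \<le> td v \<and> td v \<le> T"
    and "\<forall>v\<in>V. pbar v \<ge> 0 \<and> emin v \<le> emax v"
    and "in_Fc V T eta dt ta td ea ed pbar emin emax phat pcheck"
    and "\<forall>t\<in>{1..T}. pcheck t \<le> pd t \<and> pd t \<le> phat t"
  shows "\<exists>pc e. disaggregates V T eta dt ta td ea ed pbar emin emax pd pc e"
proof -
  note fin = assms(1) and win = assms(4) and btw = assms(7)
  obtain hpc he cpc ce where
      dh: "disaggregates V T eta dt ta td ea ed pbar emin emax phat hpc he"
    and dc: "disaggregates V T eta dt ta td ea ed pbar emin emax pcheck cpc ce"
    using assms(6) unfolding in_Fc_def by blast
  have k: "eta * dt > 0" using assms(2,3) by simp
  define a where "a = (\<lambda>v t. if ta v \<le> t \<and> t \<le> td v then cpc v t else 0)"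
  define b where "b = (\<lambda>v t. if ta v \<le> t \<and> t \<le> td v then hpc v t else 0)"
  have fa: "emin v \<le> ea v \<and> uok T (eta * dt) (ta v) (td v) (ea v) (ed v) (pbar v) (emax v) (a v)"
    if "v \<in> V" for v
    using feas_to_uok[of T eta dt "ta v" "td v" "ea v" "ed v" "pbar v" "emin v" "emax v" "cpc v" "ce v"]
      dc win that unfolding disaggregates_def a_def by auto
  have fb: "uok T (eta * dt) (ta v) (td v) (ea v) (ed v) (pbar v) (emax v) (b v)"
    if "v \<in> V" for v
    using feas_to_uok[of T eta dt "ta v" "td v" "ea v" "ed v" "pbar v" "emin v" "emax v" "hpc v" "he v"]
      dh win that unfolding disaggregates_def b_def by auto
  have sa: "(\<Sum>v\<in>V. a v t) = pcheck t" if "t \<in> {1..T}" for t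
  proof -
    have "(\<Sum>v\<in>V. a v t) = (\<Sum>v\<in>V. cpc v t)"
    proof (rule sum.cong)
      fix v assume "v \<in> V"
      then have "ev_feasible T eta dt (ta v) (td v) (ea v) (ed v) (pbar v) (emin v) (emax v) (cpc v) (ce v)"
        using dc unfolding disaggregates_def by auto
      then show "a v t = cpc v t" using that unfolding a_def ev_feasible_def by auto
    qed simp
    then show ?thesis using dc that unfolding disaggregates_def by auto
  qed
  have sb: "(\<Sum>v\<in>V. b v t) = phat t" if "t \<in> {1..T}" for t
  proof -
    have "(\<Sum>v\<in>V. b v t) = (\<Sum>v\<in>V. hpc v t)"
    proof (rule sum.cong)
      fix v assume "v \<in> V"
      then have "ev_feasible T eta dt (ta v) (td v) (ea v) (ed v) (pbar v) (emin v) (emax v) (hpc v) (he v)"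
        using dh unfolding disaggregates_def by auto
      then show "b v t = hpc v t" using that unfolding b_def ev_feasible_def by auto
    qed simp
    then show ?thesis using dh that unfolding disaggregates_def by auto
  qed
  obtain c where cU: "\<forall>v\<in>V. uok T (eta * dt) (ta v) (td v) (ea v) (ed v) (pbar v) (emax v) (c v)"
    and cs: "\<forall>t\<in>{1..T}. (\<Sum>v\<in>V. c v t) = pd t"
    using main_C[OF fin k win, of ea ed pbar emax a b pd] fa fb sa sb btw by auto
  have "disaggregates V T eta dt ta td ea ed pbar emin emax pd c
          (\<lambda>v t. ea v + eta * dt * sum (c v) {ta v..<t})"
    unfolding disaggregates_def
  proof (intro conjI ballI)
    fix t assume "t \<in> {1..T}" then show "pd t = (\<Sum>v\<in>V. c v t)" using cs by auto
  next
    fix v assume vV: "v \<in> V"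
    show "ev_feasible T eta dt (ta v) (td v) (ea v) (ed v) (pbar v) (emin v) (emax v) (c v)
        (\<lambda>t. ea v + eta * dt * sum (c v) {ta v..<t})"
      using uok_to_feas[OF cU[rule_format, OF vV] k] fa[OF vV] win vV by auto
  qed
  then show ?thesis by blast
qed

end
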